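(* Let $n\geqslant2$, $m\geqslant1$, let $\tau$ be a cuspidal $\mathrm{R}$-representation of $\mathrm{GL}_n(k_\mathrm{F})$, and let $g\in\mathcal{C}_n$ be a matrix which is not diagonal. Then $$\mathrm{Hom}_{\mathrm{R}[\overline{\mathrm{K}_n\cap g\mathrm{K}_n(m)g^{-1}}]}(1,\tau)=0.$$
   Context: $\mathrm{F}$ non-archimedean local field, ring of integers $\mathfrak{o}_\mathrm{F}$, maximal ideal $\mathfrak{p}_\mathrm{F}=\varpi_\mathrm{F}\mathfrak{o}_\mathrm{F}$, normalized valuation $\mathrm{val}_\mathrm{F}$, residue field $k_\mathrm{F}$ of characteristic $p$. $\mathrm{R}$ algebraically closed of characteristic $\ell\neq p$. $\mathrm{K}_n=\mathrm{GL}_n(\mathfrak{o}_\mathrm{F})$, $\mathrm{K}_n^1=1+\mathrm{M}_n(\mathfrak{p}_\mathrm{F})$; for a subgroup $H\subseteq\mathrm{K}_n$, $\overline H$ is its image in $\mathrm{K}_n/\mathrm{K}_n^1=\mathrm{GL}_n(k_\mathrm{F})$. For $m\geqslant1$, $\mathrm{K}_n(m)=\{\left(\begin{smallmatrix}a&b\\c&d\end{smallmatrix}\right)\in\mathrm{K}_n: c\in\mathrm{M}_{1\times(n-1)}(\mathfrak{p}_\mathrm{F}^m),\ d\in1+\mathfrak{p}_\mathrm{F}^m\}$. Cuspidal representation of $\mathrm{GL}_n(k_\mathrm{F})$: irreducible with no nonzero vectors fixed by the unipotent radical of any proper parabolic subgroup. $\mathcal{C}_n$ is the set of matrices $$\begin{pmatrix}\varpi_\mathrm{F}^{\alpha_{n-1}}&&&&\\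 &\varpi_\mathrm{F}^{\alpha_{n-2}}&&&\\ &&\ddots&&\\ &&&\varpi_\mathrm{F}^{\alpha_1}&\\ \tilde v_{n-1}&\tilde v_{n-2}&\cdots&\tilde v_1&1\end{pmatrix}$$ with integers $0\leqslant\alpha_1\leqslant\dots\leqslant\alpha_{n-1}$, $v_i\in\mathfrak{o}_\mathrm{F}/\mathfrak{p}_\mathrm{F}^m$ with fixed lifts $\tilde v_i\in\mathfrak{o}_\mathrm{F}$ ($\tilde 0=0$), and for each $i$ either $\tilde v_i=0$ or $\mathrm{val}_\mathrm{F}(\tilde v_i)<\alpha_i$. *)

theory Defs
  imports "Jordan_Normal_Form.Determinant" "HOL-Computational_Algebra.Polynomial"
begin

text \<open>The normalized valuation is a function val :: 'f => int; its value at 0 is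
irrelevant (val 0 = infinity is encoded by the disjunct x = 0 below).\<close>

definition in_pow :: "('f::field \<Rightarrow> int) \<Rightarrow> int \<Rightarrow> 'f \<Rightarrow> bool" where
  "in_pow val m x \<longleftrightarrow> x = 0 \<or> m \<le> val x"

abbreviation in_int :: "('f::field \<Rightarrow> int) \<Rightarrow> 'f \<Rightarrow> bool" where
  "in_int val x \<equiv> in_pow val 0 x"

text \<open>F is a non-archimedean local field with normalized valuation val, and
red : o_F -> k is the reduction map onto the (finite) residue field k = k_F.\<close>
definition nonarch_local_field :: "('f::field \<Rightarrow> int) \<Rightarrow> ('f \<Rightarrow> 'k::{field,finite}) \<Rightarrow> bool" where
  "nonarch_local_field val red \<longleftrightarrow>
     (\<forall>x y. x \<noteq> 0 \<longrightarrow> y \<noteq> 0 \<longrightarrow> val (x * y) = val x + val y) \<and>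
     (\<forall>x y. x \<noteq> 0 \<longrightarrow> y \<noteq> 0 \<longrightarrow> x + y \<noteq> 0 \<longrightarrow> min (val x) (val y) \<le> val (x + y)) \<and>
     (\<exists>\<pi>. \<pi> \<noteq> 0 \<and> val \<pi> = 1) \<and>
     (\<forall>a :: nat \<Rightarrow> 'f. (\<forall>N. \<exists>M. \<forall>i\<ge>M. \<forall>j\<ge>M. in_pow val N (a i - a j)) \<longrightarrow>
        (\<exists>L. \<forall>N. \<exists>M. \<forall>i\<ge>M. in_pow val N (a i - L))) \<and>
     (\<forall>x y. in_int val x \<longrightarrow> in_int val y \<longrightarrow> red (x + y) = red x + red y) \<and>
     (\<forall>x y. in_int val x \<longrightarrow> in_int val y \<longrightarrow> red (x * y) = red x * red y) \<and>
     red 1 = 1 \<and>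
     (\<forall>z. \<exists>x. in_int val x \<and> red x = z) \<and>
     (\<forall>x. in_int val x \<longrightarrow> (red x = 0 \<longleftrightarrow> in_pow val 1 x))"

definition K :: "('f::field \<Rightarrow> int) \<Rightarrow> nat \<Rightarrow> 'f mat set" where
  "K val n = {A \<in> carrier_mat n n. (\<forall>i<n. \<forall>j<n. in_int val (A $$ (i,j))) \<and>
                 det A \<noteq> 0 \<and> val (det A) = 0}"

definition Km :: "('f::field \<Rightarrow> int) \<Rightarrow> nat \<Rightarrow> nat \<Rightarrow> 'f mat set" where
  "Km val n m = {A \<in> K val n. (\<forall>j<n-1. in_pow val (int m) (A $$ (n-1,j))) \<and>
                   in_pow val (int m) (A $$ (n-1,n-1) - 1)}"

definition conj_set :: "nat \<Rightarrow> 'a::comm_ring_1 mat \<Rightarrow> 'a mat set \<Rightarrow> 'a mat set" where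
  "conj_set n g S = {g * s * h | s h. s \<in> S \<and> h \<in> carrier_mat n n \<and> h * g = 1\<^sub>m n}"

definition GL :: "nat \<Rightarrow> 'a::field mat set" where
  "GL n = {A \<in> carrier_mat n n. det A \<noteq> 0}"

text \<open>The matrices of C_n (row/column indices 0..n-1).\<close>
definition Cmat :: "nat \<Rightarrow> 'f::field \<Rightarrow> (nat \<Rightarrow> nat) \<Rightarrow> (nat \<Rightarrow> 'f) \<Rightarrow> 'f mat" where
  "Cmat n \<pi> \<alpha> v = mat n n (\<lambda>(i,j).
      if i < n - 1 then (if j = i then \<pi> ^ \<alpha> (n - 1 - i) else 0)
      else (if j = n - 1 then 1 else v (n - 1 - j)))"

definition is_rep :: "nat \<Rightarrow> ('r::field \<Rightarrow> 'v::ab_group_add \<Rightarrow> 'v) \<Rightarrow> ('k::field mat \<Rightarrow> 'v \<Rightarrow> 'v) \<Rightarrow> bool" where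
  "is_rep n scale \<rho> \<longleftrightarrow> vector_space scale \<and>
     (\<forall>A\<in>GL n. Vector_Spaces.linear scale scale (\<rho> A)) \<and>
     (\<forall>A\<in>GL n. \<forall>B\<in>GL n. \<rho> (A * B) = \<rho> A \<circ> \<rho> B) \<and>
     \<rho> (1\<^sub>m n) = id"

definition irreducible_rep :: "nat \<Rightarrow> ('r::field \<Rightarrow> 'v::ab_group_add \<Rightarrow> 'v) \<Rightarrow> ('k::field mat \<Rightarrow> 'v \<Rightarrow> 'v) \<Rightarrow> bool" where
  "irreducible_rep n scale \<rho> \<longleftrightarrow> is_rep n scale \<rho> \<and> (\<exists>v::'v. v \<noteq> 0) \<and>
     (\<forall>W. module.subspace scale W \<and> (\<forall>A\<in>GL n. \<forall>w\<in>W. \<rho> A w \<in> W) \<longrightarrow> W = {0} \<or> W = UNIV)"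

text \<open>Block index of i for the composition of n with cut points S \<subseteq> {1..n-1}.\<close>
definition blk :: "nat set \<Rightarrow> nat \<Rightarrow> nat" where
  "blk S i = card {s \<in> S. s \<le> i}"

definition std_unip :: "nat \<Rightarrow> nat set \<Rightarrow> 'a::comm_ring_1 mat set" where
  "std_unip n S = {A \<in> carrier_mat n n. \<forall>i<n. \<forall>j<n.
      (blk S i = blk S j \<longrightarrow> A $$ (i,j) = (if i = j then 1 else 0)) \<and>
      (blk S j < blk S i \<longrightarrow> A $$ (i,j) = 0)}"

text \<open>Unipotent radicals of proper parabolic subgroups of GL_n(k): the
GL_n(k)-conjugates of those of proper standard parabolics (S nonempty).\<close>
definition proper_parabolic_unips :: "nat \<Rightarrow> 'a::field mat set set" where
  "proper_parabolic_unips n = {conj_set n g (std_unip n S) | g S.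
      g \<in> GL n \<and> S \<subseteq> {1..<n} \<and> S \<noteq> {}}"

definition cuspidal :: "nat \<Rightarrow> ('r::field \<Rightarrow> 'v::ab_group_add \<Rightarrow> 'v) \<Rightarrow> ('k::field mat \<Rightarrow> 'v \<Rightarrow> 'v) \<Rightarrow> bool" where
  "cuspidal n scale \<rho> \<longleftrightarrow> irreducible_rep n scale \<rho> \<and>
     (\<forall>U \<in> proper_parabolic_unips n. \<forall>v. (\<forall>u\<in>U. \<rho> u v = v) \<longrightarrow> v = 0)"

end

theory Submission
  imports Defs
begin

context
  fixes val :: "'f::field \<Rightarrow> int" and red :: "'f \<Rightarrow> 'k::{field,finite}"
  assumes F: "nonarch_local_field val red"
begin

lemma val_mult: "x \<noteq> 0 \<Longrightarrow> y \<noteq> 0 \<Longrightarrow> val (x * y) = val x + val y"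
  using F unfolding nonarch_local_field_def by blast

lemma val_one: "val 1 = 0"
  using val_mult[of 1 1] by simp

lemma val_inverse: "x \<noteq> 0 \<Longrightarrow> val (inverse x) = - val x"
  using val_mult[of x "inverse x"] val_one by simp

lemma val_divide: "x \<noteq> 0 \<Longrightarrow> y \<noteq> 0 \<Longrightarrow> val (x / y) = val x - val y"
  by (simp add: divide_inverse val_mult val_inverse)

lemma val_power: "x \<noteq> 0 \<Longrightarrow> val (x ^ k) = int k * val x"
  by (induction k) (auto simp: val_one val_mult algebra_simps)

lemma val_uminus: "val (- x) = val x"
proof (cases "x = 0")
  case False
  have "val ((-1) * (-1)) = 0" using val_one by simp
  hence "val (-1::'f) = 0" using val_mult[of "-1" "-1"] by simp
  thus ?thesis using val_mult[of "-1" x] False by simp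
qed simp

lemma in_pow_add: "in_pow val N x \<Longrightarrow> in_pow val N y \<Longrightarrow> in_pow val N (x + y)"
  using F unfolding nonarch_local_field_def in_pow_def
  by (metis add.right_neutral add_0 min.bounded_iff order.trans)

lemma in_pow_mult: "in_pow val a x \<Longrightarrow> in_pow val b y \<Longrightarrow> in_pow val (a + b) (x * y)"
  unfolding in_pow_def by (cases "x = 0 \<or> y = 0") (auto simp: val_mult)

lemma in_pow_uminus: "in_pow val a x \<Longrightarrow> in_pow val a (- x)"
  unfolding in_pow_def by (auto simp: val_uminus)

lemma in_pow_diff: "in_pow val N x \<Longrightarrow> in_pow val N y \<Longrightarrow> in_pow val N (x - y)"
  using in_pow_add[of N x "-y"] in_pow_uminus[of N y] by simp

lemma in_pow_mono: "a \<le> b \<Longrightarrow> in_pow val b x \<Longrightarrow> in_pow val a x"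
  unfolding in_pow_def by auto

lemma in_int_0: "in_int val 0" and in_int_1: "in_int val 1"
  unfolding in_pow_def by (auto simp: val_one)

lemma red_add: "in_int val x \<Longrightarrow> in_int val y \<Longrightarrow> red (x + y) = red x + red y"
  using F unfolding nonarch_local_field_def by blast

lemma red_mult: "in_int val x \<Longrightarrow> in_int val y \<Longrightarrow> red (x * y) = red x * red y"
  using F unfolding nonarch_local_field_def by blast

lemma red_one: "red 1 = 1"
  using F unfolding nonarch_local_field_def by blast

lemma red_surj: "\<exists>x. in_int val x \<and> red x = z"
  using F unfolding nonarch_local_field_def by blast

lemma red_zero_iff: "in_int val x \<Longrightarrow> red x = 0 \<longleftrightarrow> in_pow val 1 x"
  using F unfolding nonarch_local_field_def by blast

lemma red_0: "red 0 = 0"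
proof -
  have "red 0 = red 0 + red 0" using red_add[of 0 0] in_int_0 by simp
  thus ?thesis using add_cancel_right_right by metis
qed

lemma red_uminus: "in_int val x \<Longrightarrow> red (- x) = - red x"
proof -
  assume x: "in_int val x"
  have "red x + red (- x) = 0" using red_add[of x "-x"] in_pow_uminus[of 0 x] red_0 x by simp
  thus ?thesis by (metis neg_eq_iff_add_eq_0)
qed

lemma in_int_sum: "(\<And>i. i \<in> S \<Longrightarrow> in_int val (f i)) \<Longrightarrow> in_int val (sum f S)"
  by (induction S rule: infinite_finite_induct) (auto simp: in_int_0 in_pow_add)

lemma red_sum: "(\<And>i. i \<in> S \<Longrightarrow> in_int val (f i)) \<Longrightarrow> red (sum f S) = (\<Sum>i\<in>S. red (f i))"
  by (induction S rule: infinite_finite_induct) (auto simp: red_0 red_add in_int_sum)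

lemma in_int_prod: "(\<And>i. i \<in> S \<Longrightarrow> in_int val (f i)) \<Longrightarrow> in_int val (prod f S)"
  by (induction S rule: infinite_finite_induct) (auto simp: in_int_1 intro: in_pow_mult[of 0 _ 0, simplified])

lemma red_prod: "(\<And>i. i \<in> S \<Longrightarrow> in_int val (f i)) \<Longrightarrow> red (prod f S) = (\<Prod>i\<in>S. red (f i))"
  by (induction S rule: infinite_finite_induct) (auto simp: red_one red_mult in_int_prod)

lemma in_int_signof: "in_int val (signof p :: 'f)"
  unfolding sign_def using in_int_1 in_pow_uminus[of 0 1] by auto

lemma red_signof: "red (signof p) = signof p"
  unfolding sign_def using red_one red_uminus[of 1] in_int_1 by auto

lemma in_int_term:
  assumes p: "p permutes {0..<n}" and A: "\<And>i j. i < n \<Longrightarrow> j < n \<Longrightarrow> in_int val (A $$ (i,j))"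
  shows "in_int val (\<Prod>i = 0..<n. A $$ (i, p i))" "in_int val (signof p * (\<Prod>i = 0..<n. A $$ (i, p i)))"
proof -
  have pi: "\<And>i. i \<in> {0..<n} \<Longrightarrow> p i < n" using p by (auto dest: permutes_in_image)
  show 1: "in_int val (\<Prod>i = 0..<n. A $$ (i, p i))"
    by (rule in_int_prod) (use A pi in auto)
  show "in_int val (signof p * (\<Prod>i = 0..<n. A $$ (i, p i)))"
    using in_pow_mult[OF in_int_signof 1] by simp
qed

lemma in_int_det:
  assumes "A \<in> carrier_mat n n" "\<And>i j. i < n \<Longrightarrow> j < n \<Longrightarrow> in_int val (A $$ (i,j))"
  shows "in_int val (det A)"
  unfolding det_def'[OF assms(1)]
  by (rule in_int_sum) (use in_int_term(2)[OF _ assms(2)] in auto)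

lemma red_det:
  assumes "A \<in> carrier_mat n n" "\<And>i j. i < n \<Longrightarrow> j < n \<Longrightarrow> in_int val (A $$ (i,j))"
  shows "red (det A) = det (map_mat red A)"
proof -
  have "red (det A) = (\<Sum>p\<in>{p. p permutes {0..<n}}. red (signof p * (\<Prod>i = 0..<n. A $$ (i, p i))))"
    unfolding det_def'[OF assms(1)]
    by (rule red_sum) (use in_int_term(2)[OF _ assms(2)] in auto)
  also have "\<dots> = (\<Sum>p\<in>{p. p permutes {0..<n}}. signof p * (\<Prod>i = 0..<n. map_mat red A $$ (i, p i)))"
  proof (rule sum.cong[OF refl])
    fix p assume "p \<in> {p. p permutes {0..<n}}"
    hence p: "p permutes {0..<n}" by simp
    have pi: "\<And>i. i \<in> {0..<n} \<Longrightarrow> p i < n" using p by (auto dest: permutes_in_image)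
    have "red (signof p * (\<Prod>i = 0..<n. A $$ (i, p i))) = red (signof p) * red (\<Prod>i = 0..<n. A $$ (i, p i))"
      by (rule red_mult[OF in_int_signof in_int_term(1)[OF p assms(2)]])
    also have "red (\<Prod>i = 0..<n. A $$ (i, p i)) = (\<Prod>i = 0..<n. red (A $$ (i, p i)))"
      by (rule red_prod) (use assms(2) pi in auto)
    also have "\<dots> = (\<Prod>i = 0..<n. map_mat red A $$ (i, p i))"
      by (rule prod.cong[OF refl]) (use assms(1) pi in auto)
    finally show "red (signof p * (\<Prod>i = 0..<n. A $$ (i, p i))) = signof p * (\<Prod>i = 0..<n. map_mat red A $$ (i, p i))"
      by (simp add: red_signof)
  qed
  also have "\<dots> = det (map_mat red A)"
    by (rule det_def'[symmetric]) (use assms(1) in auto)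
  finally show ?thesis .
qed

end

lemma sum_single:
  assumes "finite S" "a \<in> S" "\<And>t. t \<in> S \<Longrightarrow> t \<noteq> a \<Longrightarrow> f t = 0"
  shows "sum f S = f a"
proof -
  have "sum f S = f a + sum f (S - {a})" by (rule sum.remove[OF assms(1,2)])
  also have "sum f (S - {a}) = 0" by (rule sum.neutral) (use assms(3) in auto)
  finally show ?thesis by simp
qed

lemma mult_entry:
  assumes "A \<in> carrier_mat n n" "B \<in> carrier_mat n n" "i < n" "l < n"
  shows "(A * B) $$ (i,l) = (\<Sum>t\<in>{0..<n}. A $$ (i,t) * B $$ (t,l))"
  using assms by (simp add: scalar_prod_def)

definition Jrev :: "nat \<Rightarrow> 'a::comm_ring_1 mat" where
  "Jrev n = mat n n (\<lambda>(i,l). if i + l = n - 1 then 1 else 0)"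

lemma Jrev_carrier: "Jrev n \<in> carrier_mat n n"
  unfolding Jrev_def by simp

lemma Jrev_left:
  assumes A: "A \<in> carrier_mat n n" and i: "i < n" and l: "l < n"
  shows "(Jrev n * A) $$ (i,l) = A $$ (n - 1 - i, l)"
proof -
  have "(Jrev n * A) $$ (i,l) = (\<Sum>t\<in>{0..<n}. Jrev n $$ (i,t) * A $$ (t,l))"
    by (rule mult_entry[OF Jrev_carrier A i l])
  also have "\<dots> = Jrev n $$ (i,n-1-i) * A $$ (n-1-i,l)"
    by (rule sum_single) (use i in \<open>auto simp: Jrev_def\<close>)
  also have "\<dots> = A $$ (n-1-i,l)" using i by (simp add: Jrev_def)
  finally show ?thesis .
qed

lemma Jrev_right:
  assumes A: "A \<in> carrier_mat n n" and i: "i < n" and l: "l < n"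
  shows "(A * Jrev n) $$ (i,l) = A $$ (i, n - 1 - l)"
proof -
  have "(A * Jrev n) $$ (i,l) = (\<Sum>t\<in>{0..<n}. A $$ (i,t) * Jrev n $$ (t,l))"
    by (rule mult_entry[OF A Jrev_carrier i l])
  also have "\<dots> = A $$ (i,n-1-l) * Jrev n $$ (n-1-l,l)"
    by (rule sum_single) (use l in \<open>auto simp: Jrev_def\<close>)
  also have "\<dots> = A $$ (i,n-1-l)" using l by (simp add: Jrev_def)
  finally show ?thesis .
qed

lemma Jrev_sq: "Jrev n * Jrev n = (1\<^sub>m n :: 'a::comm_ring_1 mat)"
proof (rule eq_matI)
  fix i l assume "i < dim_row (1\<^sub>m n :: 'a mat)" "l < dim_col (1\<^sub>m n :: 'a mat)"
  hence i: "i < n" and l: "l < n" by auto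
  show "(Jrev n * Jrev n) $$ (i,l) = (1\<^sub>m n :: 'a mat) $$ (i,l)"
    using Jrev_left[OF Jrev_carrier i l] i l by (auto simp: Jrev_def)
qed (auto simp: Jrev_def)

lemma Jrev_GL: "(Jrev n :: 'a::field mat) \<in> GL n"
proof -
  have "det (Jrev n * Jrev n :: 'a mat) = 1" by (simp add: Jrev_sq)
  moreover have "det (Jrev n * Jrev n :: 'a mat) = det (Jrev n :: 'a mat) * det (Jrev n)"
    by (rule det_mult[OF Jrev_carrier Jrev_carrier])
  ultimately have "det (Jrev n :: 'a mat) * det (Jrev n) = 1" by simp
  thus ?thesis unfolding GL_def using Jrev_carrier by auto
qed

lemma blk_single: "blk {c} i = (if c \<le> i then 1 else 0)"
proof -
  have "{s \<in> {c}. s \<le> i} = (if c \<le> i then {c} else {})" by auto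
  thus ?thesis unfolding blk_def by simp
qed

lemma conj_unip:
  assumes j: "j < n - 1" and u: "u \<in> conj_set n (Jrev n) (std_unip n {n - 1 - j})"
  shows "u \<in> carrier_mat n n \<and> (\<forall>i<n. \<forall>l<n. \<not> (j < i \<and> l \<le> j) \<longrightarrow>
            u $$ (i,l) = (if i = l then (1::'a::field) else 0))"
proof -
  obtain s h where u_eq: "u = Jrev n * s * h" and s: "s \<in> std_unip n {n - 1 - j}"
    and h: "h \<in> carrier_mat n n" and hJ: "h * Jrev n = 1\<^sub>m n"
    using u unfolding conj_set_def by blast
  have sc: "s \<in> carrier_mat n n" using s unfolding std_unip_def by auto
  have "h = h * (Jrev n * Jrev n)" using h by (simp add: Jrev_sq)
  also have "\<dots> = (h * Jrev n) * Jrev n" using assoc_mult_mat[OF h Jrev_carrier Jrev_carrier] by simp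
  also have "\<dots> = Jrev n" using hJ left_mult_one_mat[OF Jrev_carrier[of n]] by simp
  finally have hJ': "h = Jrev n" .
  have uc: "u \<in> carrier_mat n n"
    unfolding u_eq by (rule mult_carrier_mat[OF mult_carrier_mat[OF Jrev_carrier sc] h])
  have ent: "u $$ (i,l) = s $$ (n-1-i, n-1-l)" if "i < n" "l < n" for i l
  proof -
    have "u $$ (i,l) = (Jrev n * s) $$ (i, n-1-l)"
      unfolding u_eq hJ' by (rule Jrev_right[OF mult_carrier_mat[OF Jrev_carrier sc]]) (use that in auto)
    also have "\<dots> = s $$ (n-1-i, n-1-l)"
      by (rule Jrev_left) (use that sc in auto)
    finally show ?thesis .
  qed
  have "u $$ (i,l) = (if i = l then 1 else 0)" if il: "i < n" "l < n" "\<not> (j < i \<and> l \<le> j)" for i l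
  proof -
    have sp: "\<forall>i<n. \<forall>l<n. (blk {n-1-j} i = blk {n-1-j} l \<longrightarrow> s $$ (i,l) = (if i = l then 1 else 0)) \<and>
      (blk {n-1-j} l < blk {n-1-j} i \<longrightarrow> s $$ (i,l) = 0)"
      using s unfolding std_unip_def by blast
    have a: "n-1-i < n" "n-1-l < n" using il by auto
    have eq: "(n-1-i = n-1-l) = (i = l)" using il by auto
    have spi: "(blk {n-1-j} (n-1-i) = blk {n-1-j} (n-1-l) \<longrightarrow> s $$ (n-1-i,n-1-l) = (if i = l then 1 else 0)) \<and>
      (blk {n-1-j} (n-1-l) < blk {n-1-j} (n-1-i) \<longrightarrow> s $$ (n-1-i,n-1-l) = 0)"
      using sp[rule_format, OF a] unfolding eq .
    show ?thesis
    proof (cases "n-1-j \<le> n-1-i \<longleftrightarrow> n-1-j \<le> n-1-l")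
      case True
      hence "blk {n-1-j} (n-1-i) = blk {n-1-j} (n-1-l)" unfolding blk_single by simp
      thus ?thesis using spi ent[OF il(1,2)] by simp
    next
      case False
      hence c: "n-1-j \<le> n-1-i" "\<not> n-1-j \<le> n-1-l" using il j by auto
      hence "blk {n-1-j} (n-1-l) < blk {n-1-j} (n-1-i)" unfolding blk_single by simp
      moreover have "i \<noteq> l" using c by auto
      ultimately show ?thesis using spi ent[OF il(1,2)] by simp
    qed
  qed
  thus ?thesis using uc by blast
qed


context
  fixes val :: "'f::field \<Rightarrow> int" and red :: "'f \<Rightarrow> 'k::{field,finite}"
  assumes F: "nonarch_local_field val red"
begin

lemma key:
  fixes \<pi> :: 'f and \<alpha> :: "nat \<Rightarrow> nat" and v :: "nat \<Rightarrow> 'f" and n m j :: nat and u :: "'k mat"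
  assumes unif: "\<pi> \<noteq> 0" "val \<pi> = 1"
    and n: "2 \<le> n"
    and alpha_mono: "\<forall>i j. 1 \<le> i \<longrightarrow> i \<le> j \<longrightarrow> j \<le> n - 1 \<longrightarrow> \<alpha> i \<le> \<alpha> j"
    and v_lift: "\<forall>i\<in>{1..n-1}. in_int val (v i) \<and> (v i = 0 \<or> val (v i) < int (\<alpha> i))"
    and j: "j < n - 1" and vj: "v (n - 1 - j) \<noteq> 0"
    and vz: "\<forall>l. j < l \<and> l < n - 1 \<longrightarrow> v (n - 1 - l) = 0"
    and u: "u \<in> carrier_mat n n"
    and uf: "\<forall>i<n. \<forall>l<n. \<not> (j < i \<and> l \<le> j) \<longrightarrow> u $$ (i,l) = (if i = l then 1 else 0)"
  shows "u \<in> map_mat red ` (K val n \<inter> conj_set n (Cmat n \<pi> \<alpha> v) (Km val n m))"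
proof -
  define q where "q = n - 1"
  have jq: "j < q" and qn: "q < n" using j n unfolding q_def by auto
  define g where "g = Cmat n \<pi> \<alpha> v"
  have gc: "g \<in> carrier_mat n n" unfolding g_def Cmat_def by simp
  have g_idx: "g $$ (i,l) = (if i < q then (if l = i then \<pi> ^ \<alpha> (q - i) else 0)
      else (if l = q then 1 else v (q - l)))" if "i < n" "l < n" for i l
    using that unfolding g_def Cmat_def q_def by simp
  define Xt where "Xt i l = (SOME x. in_int val x \<and> red x = u $$ (i,l))" for i l
  have Xt: "in_int val (Xt i l) \<and> red (Xt i l) = u $$ (i,l)" for i l
    unfolding Xt_def by (rule someI_ex) (rule red_surj[OF F])
  define c where "c = \<pi> ^ \<alpha> (q - j) / v (q - j)"
  define N where "N i l = (if l \<le> j \<and> j < i then Xt i l else if i = j \<and> l \<le> j then Xt q l * c else 0)" for i l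
  define k where "k = mat n n (\<lambda>(i,l). (if i = l then 1 else 0) + N i l)"
  define s where "s = mat n n (\<lambda>(i,l). (if i = l then 1 else 0) +
      (if i < q then N i l * \<pi> ^ \<alpha> (q - l) / \<pi> ^ \<alpha> (q - i) else 0))"
  have kc: "k \<in> carrier_mat n n" and sc: "s \<in> carrier_mat n n" unfolding k_def s_def by auto
  have vjq: "v (q - j) \<noteq> 0" using vj unfolding q_def .
  have vl: "in_int val (v (q - j)) \<and> val (v (q - j)) < int (\<alpha> (q - j))"
  proof -
    have "q - j \<in> {1..n-1}" using jq unfolding q_def by auto
    thus ?thesis using v_lift vjq unfolding q_def by auto
  qed
  have valpow: "val (\<pi> ^ e) = int e" for e using val_power[OF F unif(1)] unif(2) by simp
  have pow_int: "in_int val (\<pi> ^ e)" for e unfolding in_pow_def using valpow by simp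
  have c_p: "in_pow val 1 c"
  proof -
    have "val c = int (\<alpha> (q - j)) - val (v (q - j))"
      unfolding c_def using val_divide[OF F _ vjq] unif(1) valpow by simp
    thus ?thesis unfolding in_pow_def using vl by simp
  qed
  have Nq: "N i q = 0" for i unfolding N_def using jq by auto
  have N_int: "in_int val (N i l)" for i l
  proof -
    have "in_pow val (0 + 1) (Xt q l * c)" by (rule in_pow_mult[OF F]) (use Xt c_p in auto)
    hence "in_int val (Xt q l * c)" by (rule in_pow_mono[OF F, rotated]) simp
    thus ?thesis unfolding N_def using Xt in_int_0[OF F] by auto
  qed
  have N_red: "red (N i l) = (if l \<le> j \<and> j < i then u $$ (i,l) else 0)" for i l
  proof -
    have "in_pow val (0 + 1) (Xt q l * c)" by (rule in_pow_mult[OF F]) (use Xt c_p in auto)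
    hence "in_int val (Xt q l * c)" "in_pow val 1 (Xt q l * c)" using in_pow_mono[OF F, of 0 1] by auto
    hence "red (Xt q l * c) = 0" using red_zero_iff[OF F] by blast
    thus ?thesis unfolding N_def using Xt red_0[OF F] by auto
  qed
  have delta_int: "in_int val (if i = l then 1 else 0 :: 'f)" for i l using in_int_0[OF F] in_int_1[OF F] by auto
  have delta_red: "red (if i = l then 1 else 0 :: 'f) = (if i = l then 1 else 0)" for i l
    using red_0[OF F] red_one[OF F] by auto
  have amono: "\<alpha> (q - i) \<le> \<alpha> (q - l)" if "i < q" "l \<le> i" for i l
    using alpha_mono that unfolding q_def by auto
  have k_red: "map_mat red k = u"
  proof (rule eq_matI)
    fix i l assume "i < dim_row u" "l < dim_col u"
    hence il: "i < n" "l < n" using u by auto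
    have "map_mat red k $$ (i,l) = red ((if i = l then 1 else 0) + N i l)"
      unfolding k_def using il by simp
    also have "\<dots> = (if i = l then 1 else 0) + (if l \<le> j \<and> j < i then u $$ (i,l) else 0)"
      unfolding red_add[OF F delta_int[of i l] N_int[of i l]] delta_red[of i l] N_red[of i l] ..
    also have "\<dots> = u $$ (i,l)" using uf il by auto
    finally show "map_mat red k $$ (i,l) = u $$ (i,l)" .
  qed (use u kc in auto)
  have det_u: "det u = 1"
  proof -
    have "det u = prod_list (diag_mat u)"
      by (rule det_lower_triangular[OF _ u]) (use uf in auto)
    also have "\<dots> = (\<Prod>i = 0..<n. u $$ (i,i))" using u by (simp add: prod_list_diag_prod)
    also have "\<dots> = 1" by (rule prod.neutral) (use uf in auto)
    finally show ?thesis .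
  qed
  have k_int: "in_int val (k $$ (i,l))" if "i < n" "l < n" for i l
  proof -
    have "k $$ (i,l) = (if i = l then 1 else 0) + N i l" unfolding k_def using that by simp
    thus ?thesis using in_pow_add[OF F delta_int[of i l] N_int[of i l]] by simp
  qed
  have k_K: "k \<in> K val n"
  proof -
    have "red (det k) = det (map_mat red k)" by (rule red_det[OF F kc k_int])
    hence rd: "red (det k) = 1" using k_red det_u by simp
    have di: "in_int val (det k)" by (rule in_int_det[OF F kc k_int])
    have nz: "det k \<noteq> 0" using rd red_0[OF F] by auto
    have "\<not> in_pow val 1 (det k)" using rd red_zero_iff[OF F di] by simp
    hence "val (det k) = 0" using di nz unfolding in_pow_def by simp
    thus ?thesis unfolding K_def using kc k_int nz by auto
  qed
  have s_idx: "s $$ (i,l) = (if i = l then 1 else 0) +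
      (if i < q then N i l * \<pi> ^ \<alpha> (q - l) / \<pi> ^ \<alpha> (q - i) else 0)" if "i < n" "l < n" for i l
    using that unfolding s_def by simp
  have k_idx: "k $$ (i,l) = (if i = l then 1 else 0) + N i l" if "i < n" "l < n" for i l
    using that unfolding k_def by simp
  have N_nz: "l \<le> i" if "N i l \<noteq> 0" for i l using that unfolding N_def by (auto split: if_splits)
  have s_int: "in_int val (s $$ (i,l))" if il: "i < n" "l < n" for i l
  proof -
    have "in_int val (if i < q then N i l * \<pi> ^ \<alpha> (q - l) / \<pi> ^ \<alpha> (q - i) else 0)"
    proof (cases "i < q \<and> N i l \<noteq> 0")
      case True
      hence le: "\<alpha> (q - i) \<le> \<alpha> (q - l)" using amono N_nz by blast
      have "N i l * \<pi> ^ \<alpha> (q - l) / \<pi> ^ \<alpha> (q - i) = N i l * \<pi> ^ (\<alpha> (q - l) - \<alpha> (q - i))"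
        using power_diff[OF unif(1) le] by simp
      moreover have "in_pow val (0 + 0) (N i l * \<pi> ^ (\<alpha> (q - l) - \<alpha> (q - i)))"
        by (rule in_pow_mult[OF F N_int pow_int])
      ultimately show ?thesis using True by simp
    next
      case False
      thus ?thesis using in_int_0[OF F] by auto
    qed
    from in_pow_add[OF F delta_int[of i l] this] show ?thesis unfolding s_idx[OF il] .
  qed
  have gs: "g * s = k * g"
  proof (rule eq_matI)
    fix i l assume "i < dim_row (k * g)" "l < dim_col (k * g)"
    hence il: "i < n" "l < n" using kc gc by auto
    have L: "(g * s) $$ (i,l) = (\<Sum>t\<in>{0..<n}. g $$ (i,t) * s $$ (t,l))" by (rule mult_entry[OF gc sc il])
    have R: "(k * g) $$ (i,l) = (\<Sum>t\<in>{0..<n}. k $$ (i,t) * g $$ (t,l))" by (rule mult_entry[OF kc gc il])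
    show "(g * s) $$ (i,l) = (k * g) $$ (i,l)"
    proof (cases "i < q")
      case True
      have "(\<Sum>t\<in>{0..<n}. g $$ (i,t) * s $$ (t,l)) = g $$ (i,i) * s $$ (i,l)"
        by (rule sum_single) (use True il g_idx in auto)
      also have "\<dots> = \<pi> ^ \<alpha> (q - i) * ((if i = l then 1 else 0) + N i l * \<pi> ^ \<alpha> (q - l) / \<pi> ^ \<alpha> (q - i))"
        using g_idx s_idx True il by simp
      also have "\<dots> = (if i = l then \<pi> ^ \<alpha> (q - l) else 0) + N i l * \<pi> ^ \<alpha> (q - l)"
        using unif(1) by (simp add: field_simps)
      finally have LL: "(\<Sum>t\<in>{0..<n}. g $$ (i,t) * s $$ (t,l)) = (if i = l then \<pi> ^ \<alpha> (q - l) else 0) + N i l * \<pi> ^ \<alpha> (q - l)" .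
      have kiq: "k $$ (i,q) = 0" using k_idx[OF il(1) qn] Nq True by simp
      show ?thesis
      proof (cases "l < q")
        case lq: True
        have "(\<Sum>t\<in>{0..<n}. k $$ (i,t) * g $$ (t,l)) = k $$ (i,l) * g $$ (l,l)"
        proof (rule sum_single)
          fix t assume t: "t \<in> {0..<n}" "t \<noteq> l"
          show "k $$ (i,t) * g $$ (t,l) = 0"
          proof (cases "t < q")
            case True thus ?thesis using g_idx t il by simp
          next
            case False hence "t = q" using t unfolding q_def by auto
            thus ?thesis using kiq by simp
          qed
        qed (use il in auto)
        also have "\<dots> = ((if i = l then 1 else 0) + N i l) * \<pi> ^ \<alpha> (q - l)"
          using k_idx g_idx il lq by simp
        finally show ?thesis unfolding L R LL by (simp add: algebra_simps)
      next
        case lq: False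
        hence lq': "l = q" using il unfolding q_def by auto
        have "(\<Sum>t\<in>{0..<n}. k $$ (i,t) * g $$ (t,l)) = k $$ (i,q) * g $$ (q,l)"
        proof (rule sum_single)
          fix t assume t: "t \<in> {0..<n}" "t \<noteq> q"
          hence "t < q" unfolding q_def by auto
          thus "k $$ (i,t) * g $$ (t,l) = 0" using g_idx t lq' qn by simp
        qed (use qn in auto)
        also have "\<dots> = 0" using kiq by simp
        finally show ?thesis unfolding L R LL using lq' Nq True by simp
      qed
    next
      case False
      hence iq: "i = q" using il unfolding q_def by auto
      have split: "{0..<n} = insert q {0..<q}" using qn unfolding q_def by auto
      define P where "P t = \<pi> ^ \<alpha> (q - l) / \<pi> ^ \<alpha> (q - t)" for t
      have "(\<Sum>t\<in>{0..<n}. g $$ (i,t) * s $$ (t,l)) = g $$ (q,q) * s $$ (q,l) + (\<Sum>t\<in>{0..<q}. g $$ (q,t) * s $$ (t,l))"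
        unfolding split iq by (simp add: sum.insert)
      also have "(\<Sum>t\<in>{0..<q}. g $$ (q,t) * s $$ (t,l)) =
          (\<Sum>t\<in>{0..<q}. v (q - t) * (if t = l then 1 else 0) + v (q - t) * (N t l * P t))"
        by (rule sum.cong[OF refl]) (use g_idx s_idx il qn in \<open>auto simp: P_def algebra_simps q_def\<close>)
      also have "\<dots> = (\<Sum>t\<in>{0..<q}. v (q - t) * (if t = l then 1 else 0)) + (\<Sum>t\<in>{0..<q}. v (q - t) * (N t l * P t))"
        by (rule sum.distrib)
      also have "(\<Sum>t\<in>{0..<q}. v (q - t) * (if t = l then 1 else 0)) = (if l < q then v (q - l) else 0)"
      proof (cases "l < q")
        case True thus ?thesis by (subst sum_single[of _ l]) auto
      next
        case False thus ?thesis by (auto intro: sum.neutral)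
      qed
      also have "(\<Sum>t\<in>{0..<q}. v (q - t) * (N t l * P t)) = v (q - j) * (N j l * P j)"
      proof (rule sum_single)
        fix t assume t: "t \<in> {0..<q}" "t \<noteq> j"
        show "v (q - t) * (N t l * P t) = 0"
        proof (cases "j < t")
          case True thus ?thesis using vz t unfolding q_def by auto
        next
          case False hence "N t l = 0" using t unfolding N_def by auto
          thus ?thesis by simp
        qed
      qed (use jq in auto)
      also have "v (q - j) * (N j l * P j) = (if l \<le> j then Xt q l * \<pi> ^ \<alpha> (q - l) else 0)"
        unfolding N_def P_def c_def using vjq unif(1) by (simp add: field_simps)
      finally have LL: "(\<Sum>t\<in>{0..<n}. g $$ (i,t) * s $$ (t,l)) = g $$ (q,q) * s $$ (q,l) +
          ((if l < q then v (q - l) else 0) + (if l \<le> j then Xt q l * \<pi> ^ \<alpha> (q - l) else 0))" .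
      have "(\<Sum>t\<in>{0..<n}. k $$ (i,t) * g $$ (t,l)) = k $$ (q,q) * g $$ (q,l) + (\<Sum>t\<in>{0..<q}. k $$ (q,t) * g $$ (t,l))"
        unfolding split iq by (simp add: sum.insert)
      also have "(\<Sum>t\<in>{0..<q}. k $$ (q,t) * g $$ (t,l)) = (if l < q then k $$ (q,l) * \<pi> ^ \<alpha> (q - l) else 0)"
      proof (cases "l < q")
        case True
        have "(\<Sum>t\<in>{0..<q}. k $$ (q,t) * g $$ (t,l)) = k $$ (q,l) * g $$ (l,l)"
          by (rule sum_single) (use True il g_idx qn in \<open>auto simp: q_def\<close>)
        thus ?thesis using True g_idx il by simp
      next
        case False
        hence "l = q" using il unfolding q_def by auto
        thus ?thesis using g_idx qn by (auto intro: sum.neutral simp: q_def)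
      qed
      finally have RR: "(\<Sum>t\<in>{0..<n}. k $$ (i,t) * g $$ (t,l)) = k $$ (q,q) * g $$ (q,l) +
          (if l < q then k $$ (q,l) * \<pi> ^ \<alpha> (q - l) else 0)" .
      have kqq: "k $$ (q,q) = 1" using k_idx[OF qn qn] Nq by simp
      have kql: "k $$ (q,l) = (if l \<le> j then Xt q l else 0)" if "l < q"
        using k_idx[OF qn il(2)] that jq unfolding N_def by auto
      have sql: "s $$ (q,l) = (if q = l then 1 else 0)" using s_idx[OF qn il(2)] by simp
      show ?thesis unfolding L R LL RR kqq sql
        using g_idx[OF qn il(2)] kql jq il by (cases "l < q") (auto simp: q_def)
    qed
  qed (use kc gc sc in auto)
  have det_g: "det g \<noteq> 0"
  proof -
    have "det g = prod_list (diag_mat g)"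
    proof (rule det_lower_triangular[OF _ gc])
      fix i l assume "i < l" "l < n"
      hence "i < q" "i < n" unfolding q_def by auto
      thus "g $$ (i,l) = 0" using g_idx[OF _ \<open>l < n\<close>] \<open>i < l\<close> by simp
    qed
    also have "\<dots> = (\<Prod>i = 0..<n. g $$ (i,i))" using gc by (simp add: prod_list_diag_prod)
    also have "\<dots> \<noteq> 0"
    proof -
      have "g $$ (i,i) \<noteq> 0" if "i \<in> {0..<n}" for i
        using that g_idx[of i i] unif(1) unfolding q_def by auto
      thus ?thesis by (simp add: prod_zero_iff)
    qed
    finally show ?thesis .
  qed
  obtain h where hc: "h \<in> carrier_mat n n" and gh: "g * h = 1\<^sub>m n" and hg: "h * g = 1\<^sub>m n"
    using det_non_zero_imp_unit[OF gc det_g, of undefined] unfolding Units_def ring_mat_def by auto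
  have k_eq: "g * s * h = k"
  proof -
    have "g * s * h = k * g * h" by (simp add: gs)
    also have "\<dots> = k * (g * h)" by (rule assoc_mult_mat[OF kc gc hc])
    also have "\<dots> = k" using gh kc by simp
    finally show ?thesis .
  qed
  have det_s: "det s = det k"
  proof -
    have "det g * det s = det k * det g"
      using det_mult[OF gc sc] det_mult[OF kc gc] gs by (metis mult.commute)
    thus ?thesis using det_g by (simp add: mult.commute)
  qed
  have s_Km: "s \<in> Km val n m"
  proof -
    have "s \<in> K val n" using k_K sc s_int det_s unfolding K_def by auto
    moreover have "s $$ (n - 1, l) = (if n - 1 = l then 1 else 0)" if "l < n" for l
      using s_idx[OF qn that] unfolding q_def by simp
    ultimately show ?thesis unfolding Km_def in_pow_def using n by auto
  qed
  have "k \<in> conj_set n g (Km val n m)"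
    unfolding conj_set_def using k_eq s_Km hc hg by blast
  thus ?thesis using k_red k_K unfolding g_def by blast
qed

end

theorem proposition4p6:
  fixes val :: "'f::field \<Rightarrow> int"
    and red :: "'f \<Rightarrow> 'k::{field,finite}"
    and scale :: "'r::field \<Rightarrow> 'v::ab_group_add \<Rightarrow> 'v"
    and \<rho> :: "'k mat \<Rightarrow> 'v \<Rightarrow> 'v"
    and n m :: nat
    and \<pi> :: 'f
    and \<alpha> :: "nat \<Rightarrow> nat"
    and v :: "nat \<Rightarrow> 'f"
  assumes F: "nonarch_local_field val red"
    and R_alg_closed: "\<forall>q :: 'r poly. 1 \<le> degree q \<longrightarrow> (\<exists>x. poly q x = 0)"
    and char_ne: "of_nat CHAR('k) \<noteq> (0 :: 'r)"
    and n: "2 \<le> n" and m: "1 \<le> m"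
    and tau: "cuspidal n scale \<rho>"
    and unif: "\<pi> \<noteq> 0" "val \<pi> = 1"
    and alpha_mono: "\<forall>i j. 1 \<le> i \<longrightarrow> i \<le> j \<longrightarrow> j \<le> n - 1 \<longrightarrow> \<alpha> i \<le> \<alpha> j"
    and v_lift: "\<forall>i\<in>{1..n-1}. in_int val (v i) \<and> (v i = 0 \<or> val (v i) < int (\<alpha> i))"
    and not_diag: "\<not> (\<forall>i<n. \<forall>j<n. i \<noteq> j \<longrightarrow> Cmat n \<pi> \<alpha> v $$ (i,j) = 0)"
  shows "{f :: 'r \<Rightarrow> 'v. Vector_Spaces.linear (*) scale f \<and>
            (\<forall>h \<in> map_mat red ` (K val n \<inter> conj_set n (Cmat n \<pi> \<alpha> v) (Km val n m)).
               \<forall>x. \<rho> h (f x) = f x)} = {\<lambda>_. 0}"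
proof -
  have cusp: "irreducible_rep n scale \<rho>" and
    cz0: "\<forall>U \<in> proper_parabolic_unips n. \<forall>w. (\<forall>u\<in>U. \<rho> u w = w) \<longrightarrow> w = 0"
    using tau unfolding cuspidal_def by auto
  hence rep: "is_rep n scale \<rho>" unfolding irreducible_rep_def by auto
  hence vs: "vector_space scale" and lin: "\<forall>A\<in>GL n. Vector_Spaces.linear scale scale (\<rho> A)"
    unfolding is_rep_def by auto
  obtain i0 l0 where il0: "i0 < n" "l0 < n" "i0 \<noteq> l0" "Cmat n \<pi> \<alpha> v $$ (i0,l0) \<noteq> 0"
    using not_diag by blast
  have i0: "i0 = n - 1" and l0: "l0 < n - 1" and vl0: "v (n - 1 - l0) \<noteq> 0"
  proof -
    show "i0 = n - 1"
    proof (rule ccontr)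
      assume "i0 \<noteq> n - 1"
      hence "i0 < n - 1" using il0 by auto
      thus False using il0 unfolding Cmat_def by simp
    qed
    thus "l0 < n - 1" using il0 by auto
    show "v (n - 1 - l0) \<noteq> 0" using il0 \<open>i0 = n - 1\<close> unfolding Cmat_def by (simp split: if_splits)
  qed
  define Sj where "Sj = {l. l < n - 1 \<and> v (n - 1 - l) \<noteq> 0}"
  have Sj_fin: "finite Sj" unfolding Sj_def by simp
  have Sj_ne: "l0 \<in> Sj" unfolding Sj_def using l0 vl0 by simp
  define j where "j = Max Sj"
  have jS: "j \<in> Sj" unfolding j_def using Max_in[OF Sj_fin] Sj_ne by auto
  hence j: "j < n - 1" and vj: "v (n - 1 - j) \<noteq> 0" unfolding Sj_def by auto
  have vz: "\<forall>l. j < l \<and> l < n - 1 \<longrightarrow> v (n - 1 - l) = 0"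
  proof (intro allI impI)
    fix l assume l: "j < l \<and> l < n - 1"
    show "v (n - 1 - l) = 0"
    proof (rule ccontr)
      assume "v (n - 1 - l) \<noteq> 0"
      hence "l \<in> Sj" unfolding Sj_def using l by simp
      hence "l \<le> j" unfolding j_def using Max_ge[OF Sj_fin] by simp
      thus False using l by simp
    qed
  qed
  define U where "U = conj_set n (Jrev n :: 'k mat) (std_unip n {n - 1 - j})"
  have U_in: "U \<in> proper_parabolic_unips n"
    unfolding proper_parabolic_unips_def U_def
    using Jrev_GL j by (intro CollectI exI[of _ "Jrev n"] exI[of _ "{n - 1 - j}"]) auto
  let ?H = "map_mat red ` (K val n \<inter> conj_set n (Cmat n \<pi> \<alpha> v) (Km val n m))"
  have U_sub: "u \<in> ?H" if "u \<in> U" for u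
  proof -
    have "u \<in> carrier_mat n n \<and> (\<forall>i<n. \<forall>l<n. \<not> (j < i \<and> l \<le> j) \<longrightarrow> u $$ (i,l) = (if i = l then 1 else 0))"
      by (rule conj_unip[OF j]) (use that in \<open>simp add: U_def\<close>)
    thus ?thesis using key[OF F unif n alpha_mono v_lift j vj vz] by blast
  qed
  have H_GL: "h \<in> GL n" if hH: "h \<in> ?H" for h
  proof -
    obtain A where A: "A \<in> K val n" and h: "h = map_mat red A" using hH by blast
    have Ac: "A \<in> carrier_mat n n" and Ai: "\<And>i l. i < n \<Longrightarrow> l < n \<Longrightarrow> in_int val (A $$ (i,l))"
      and Ad: "det A \<noteq> 0" "val (det A) = 0" using A unfolding K_def by auto
    have "red (det A) = det h" unfolding h by (rule red_det[OF F Ac Ai])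
    moreover have "red (det A) \<noteq> 0"
      using red_zero_iff[OF F in_int_det[OF F Ac Ai]] Ad unfolding in_pow_def by simp
    ultimately show ?thesis unfolding GL_def h using Ac by auto
  qed
  have sc0: "scale c 0 = 0" for c
  proof -
    have "scale c (0 + 0) = scale c 0 + scale c 0" using vs unfolding vector_space_def by blast
    thus ?thesis by simp
  qed
  have vsr: "vector_space ((*) :: 'r \<Rightarrow> 'r \<Rightarrow> 'r)"
    unfolding vector_space_def by (simp add: algebra_simps)
  show ?thesis
  proof (rule Set.set_eqI)
    fix f
    show "f \<in> {f :: 'r \<Rightarrow> 'v. Vector_Spaces.linear (*) scale f \<and> (\<forall>h\<in>?H. \<forall>x. \<rho> h (f x) = f x)} \<longleftrightarrow> f \<in> {\<lambda>_. 0}"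
    proof
    assume "f \<in> {f :: 'r \<Rightarrow> 'v. Vector_Spaces.linear (*) scale f \<and> (\<forall>h\<in>?H. \<forall>x. \<rho> h (f x) = f x)}"
    hence fix_: "\<forall>h\<in>?H. \<forall>x. \<rho> h (f x) = f x" by blast
    have "f x = 0" for x
      using cz0[rule_format, OF U_in, of "f x"] fix_ U_sub by blast
    thus "f \<in> {\<lambda>_. 0}" by auto
  next
    assume "f \<in> {\<lambda>_ :: 'r. 0 :: 'v}"
    hence f: "f = (\<lambda>_. 0)" by simp
    have "Vector_Spaces.linear (*) scale f" unfolding f Vector_Spaces.linear_iff using vsr vs sc0 by simp
    moreover have "\<rho> h 0 = 0" if "h \<in> ?H" for h
    proof -
      have "Vector_Spaces.linear scale scale (\<rho> h)" using lin H_GL[OF that] by blast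
      hence "\<rho> h (0 + 0) = \<rho> h 0 + \<rho> h 0" unfolding Vector_Spaces.linear_iff by blast
      thus ?thesis by simp
    qed
    ultimately show "f \<in> {f :: 'r \<Rightarrow> 'v. Vector_Spaces.linear (*) scale f \<and> (\<forall>h\<in>?H. \<forall>x. \<rho> h (f x) = f x)}"
      using f by simp
  qed
  qed
qed

end
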